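(* Let $A_m(x)=R_{2m}(x)$, $B_m(x)=R_{2m+1}(x)$ and $t=\frac{1+x+x^2}{2x}$. For every integer $m\ge1$, as identities of rational functions in $x$, \[ A_m(x)=x^{m-1}(1+x)U_m(t)-x^{m-2}(1+x+x^2)U_{m-1}(t), \] \[ B_m(x)=x^mU_m(t)+x^{m+2}U_{m-1}(t). \]
   Context: For $n\ge1$ let $\Xi_n$ be the poset on $\{x_1,\dots,x_n\}$ whose cover relations are exactly: $x_2\prec x_1$, $x_3\prec x_2$, and for $3\le i\le n-1$, $x_i\prec x_{i+1}$ if $i$ is odd and $x_{i+1}\prec x_i$ if $i$ is even (so $x_1>x_2>x_3<x_4>x_5<\cdots$). A filter of a poset is an up-closed subset. $\Omega_n$ is the lattice of filters of $\Xi_n$ under reverse inclusion; $\Omega_0$ is the one-element lattice. $R_n(x)=\sum_{F\in\Omega_n}x^{\,n-|F|}$ is the rank generating function of $\Omega_n$, with $R_0(x)=1$. $U_n$ are the Chebyshev polynomials of the second kind: $U_0(y)=1$, $U_1(y)=2y$, $U_n(y)=2yU_{n-1}(y)-U_{n-2}(y)$ for $n\ge2$. *)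

theory Defs
  imports Complex_Main
begin

text \<open>The poset Xi_n on elements 1..n (element i stands for x_i).
  xi_cover n i j means x_i is covered by x_j (x_i \<prec> x_j).\<close>
definition xi_cover :: "nat \<Rightarrow> nat \<Rightarrow> nat \<Rightarrow> bool" where
  "xi_cover n i j \<longleftrightarrow> i \<in> {1..n} \<and> j \<in> {1..n} \<and>
     ((i = 2 \<and> j = 1) \<or> (i = 3 \<and> j = 2) \<or>
      (\<exists>k. 3 \<le> k \<and> k \<le> n - 1 \<and>
         ((odd k \<and> i = k \<and> j = k + 1) \<or> (even k \<and> i = k + 1 \<and> j = k))))"

definition xi_le :: "nat \<Rightarrow> nat \<Rightarrow> nat \<Rightarrow> bool" where
  "xi_le n = (xi_cover n)\<^sup>*\<^sup>*"

definition xi_filters :: "nat \<Rightarrow> nat set set" where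
  "xi_filters n = {F. F \<subseteq> {1..n} \<and>
      (\<forall>a \<in> F. \<forall>b \<in> {1..n}. xi_le n a b \<longrightarrow> b \<in> F)}"

definition R :: "nat \<Rightarrow> real \<Rightarrow> real" where
  "R n x = (\<Sum>F \<in> xi_filters n. x ^ (n - card F))"

fun chebU :: "nat \<Rightarrow> real \<Rightarrow> real" where
  "chebU 0 y = 1"
| "chebU (Suc 0) y = 2 * y"
| "chebU (Suc (Suc n)) y = 2 * y * chebU (Suc n) y - chebU n y"

end

theory Submission
  imports Defs
begin

lemma cover_range: "xi_cover n i j \<Longrightarrow> i \<in> {1..n} \<and> j \<in> {1..n}"
  unfolding xi_cover_def by blast

lemma filters_closed:
  "xi_filters n = {F. F \<subseteq> {1..n} \<and> (\<forall>i j. xi_cover n i j \<longrightarrow> i \<in> F \<longrightarrow> j \<in> F)}"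
proof (intro set_eqI iffI)
  fix F assume F: "F \<in> xi_filters n"
  then have sub: "F \<subseteq> {1..n}"
    and up: "\<And>a b. a \<in> F \<Longrightarrow> b \<in> {1..n} \<Longrightarrow> xi_le n a b \<Longrightarrow> b \<in> F"
    unfolding xi_filters_def by blast+
  have "j \<in> F" if c: "xi_cover n i j" and i: "i \<in> F" for i j
  proof (rule up[OF i])
    show "j \<in> {1..n}" using cover_range[OF c] by (rule conjunct2)
    show "xi_le n i j" unfolding xi_le_def using c by (rule r_into_rtranclp)
  qed
  then show "F \<in> {F. F \<subseteq> {1..n} \<and> (\<forall>i j. xi_cover n i j \<longrightarrow> i \<in> F \<longrightarrow> j \<in> F)}"
    using sub by blast
next
  fix F assume "F \<in> {F. F \<subseteq> {1..n} \<and> (\<forall>i j. xi_cover n i j \<longrightarrow> i \<in> F \<longrightarrow> j \<in> F)}"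
  then have sub: "F \<subseteq> {1..n}" and cl: "\<And>i j. xi_cover n i j \<Longrightarrow> i \<in> F \<Longrightarrow> j \<in> F"
    by blast+
  have "b \<in> F" if "(xi_cover n)\<^sup>*\<^sup>* a b" "a \<in> F" for a b
    using that
  proof (induction rule: rtranclp_induct)
    case base then show ?case .
  next
    case (step y z) then show ?case using cl by blast
  qed
  then show "F \<in> xi_filters n"
    unfolding xi_filters_def xi_le_def using sub by blast
qed

lemma cover_alt: "xi_cover n i j \<longleftrightarrow> i \<in> {1..n} \<and> j \<in> {1..n} \<and>
   (i = 2 \<and> j = 1 \<or> i = 3 \<and> j = 2 \<or> (3 \<le> i \<and> odd i \<and> j = i + 1 \<and> i \<le> n - 1)
    \<or> (3 \<le> j \<and> even j \<and> i = j + 1 \<and> j \<le> n - 1))"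
  unfolding xi_cover_def by auto

lemma cover_mono: "xi_cover n i j \<Longrightarrow> xi_cover (Suc n) i j"
  unfolding cover_alt by auto

lemma new_edge:
  assumes "n \<ge> 1" "if n = 1 \<or> even n then i = Suc n \<and> j = n else i = n \<and> j = Suc n"
  shows "xi_cover (Suc n) i j"
proof (cases "n = 1 \<or> even n")
  case True
  then have ij: "i = Suc n" "j = n" using assms(2) by simp_all
  show ?thesis
  proof (cases "n = 1")
    case True then show ?thesis unfolding cover_alt ij by simp
  next
    case False
    then have ev: "even n" using \<open>n = 1 \<or> even n\<close> by simp
    show ?thesis
    proof (cases "n = 2")
      case True then show ?thesis unfolding cover_alt ij by simp
    next
      case False
      have "n \<ge> 3" using False \<open>n \<noteq> 1\<close> assms(1) by simp
      then show ?thesis unfolding cover_alt ij using ev by simp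
    qed
  qed
next
  case False
  then have ij: "i = n" "j = Suc n" and od: "odd n" "n \<noteq> 1" using assms(2) by simp_all
  have "n \<noteq> 2" using od by auto
  then have "n \<ge> 3" using od assms(1) by simp
  then show ?thesis unfolding cover_alt ij using od by simp
qed

lemma fwd:
  assumes "n \<ge> 1" "xi_cover (Suc n) i j" "\<not> xi_cover n i j"
  shows "if n = 1 \<or> even n then i = Suc n \<and> j = n else i = n \<and> j = Suc n"
proof -
  have r: "i \<in> {1..Suc n}" "j \<in> {1..Suc n}" using cover_range[OF assms(2)] by simp_all
  have d: "i = 2 \<and> j = 1 \<or> i = 3 \<and> j = 2 \<or> (3 \<le> i \<and> odd i \<and> j = i + 1 \<and> i \<le> n)
    \<or> (3 \<le> j \<and> even j \<and> i = j + 1 \<and> j \<le> n)"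
    using assms(2) unfolding cover_alt by simp
  have notboth: "\<not> (i \<le> n \<and> j \<le> n)"
  proof
    assume h: "i \<le> n \<and> j \<le> n"
    have "xi_cover n i j" unfolding cover_alt using r h d by auto
    then show False using assms(3) by simp
  qed
  from d show ?thesis
  proof (elim disjE conjE)
    assume "i = 2" "j = 1"
    then show ?thesis using notboth assms(1) by simp
  next
    assume h: "i = 3" "j = 2"
    then have "n = 2" using notboth r by simp
    then show ?thesis using h by simp
  next
    assume h: "3 \<le> i" "odd i" "j = i + 1" "i \<le> n"
    then have "i = n" using notboth r by simp
    then show ?thesis using h by simp
  next
    assume h: "3 \<le> j" "even j" "i = j + 1" "j \<le> n"
    then have "j = n" using notboth r by simp
    then show ?thesis using h by simp
  qed
qed

lemma cover_Suc:
  assumes "n \<ge> 1"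
  shows "xi_cover (Suc n) i j \<longleftrightarrow> xi_cover n i j \<or>
     (if n = 1 \<or> even n then i = Suc n \<and> j = n else i = n \<and> j = Suc n)"
  using cover_mono new_edge[OF assms] fwd[OF assms] by blast

lemma filters_sub: "F \<in> xi_filters n \<Longrightarrow> F \<subseteq> {1..n}"
  unfolding xi_filters_def by blast

lemma finite_filters: "finite (xi_filters n)"
proof -
  have "xi_filters n \<subseteq> Pow {1..n}" using filters_sub by blast
  then show ?thesis by (rule finite_subset) simp
qed

lemma card_filter_le: "F \<in> xi_filters n \<Longrightarrow> card F \<le> n"
  using filters_sub card_mono[of "{1..n}" F] by fastforce

lemma filters_Suc:
  assumes "n \<ge> 1"
  shows "F \<in> xi_filters (Suc n) \<longleftrightarrow> F \<subseteq> {1..Suc n} \<and> F - {Suc n} \<in> xi_filters n \<and>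
     (if n = 1 \<or> even n then Suc n \<in> F \<longrightarrow> n \<in> F else n \<in> F \<longrightarrow> Suc n \<in> F)"
proof -
  define E where "E = (if n = 1 \<or> even n then Suc n \<in> F \<longrightarrow> n \<in> F else n \<in> F \<longrightarrow> Suc n \<in> F)"
  define C1 where "C1 = (\<forall>i j. xi_cover (Suc n) i j \<longrightarrow> i \<in> F \<longrightarrow> j \<in> F)"
  define C0 where "C0 = (\<forall>i j. xi_cover n i j \<longrightarrow> i \<in> F \<longrightarrow> j \<in> F)"
  define C0' where "C0' = (\<forall>i j. xi_cover n i j \<longrightarrow> i \<in> F - {Suc n} \<longrightarrow> j \<in> F - {Suc n})"
  have loc: "C0 \<longleftrightarrow> C0'"
    unfolding C0_def C0'_def
  proof (intro iffI allI impI)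
    fix i j assume h: "\<forall>i j. xi_cover n i j \<longrightarrow> i \<in> F \<longrightarrow> j \<in> F" and c: "xi_cover n i j" and "i \<in> F - {Suc n}"
    then have "j \<in> F" by blast
    moreover have "j \<noteq> Suc n" using cover_range[OF c] by simp
    ultimately show "j \<in> F - {Suc n}" by blast
  next
    fix i j assume h: "\<forall>i j. xi_cover n i j \<longrightarrow> i \<in> F - {Suc n} \<longrightarrow> j \<in> F - {Suc n}" and c: "xi_cover n i j" and "i \<in> F"
    moreover have "i \<noteq> Suc n" using cover_range[OF c] by simp
    ultimately show "j \<in> F" by blast
  qed
  have c1: "C1 \<longleftrightarrow> C0 \<and> E"
    unfolding C1_def C0_def E_def cover_Suc[OF assms] by auto
  have f1: "F \<in> xi_filters (Suc n) \<longleftrightarrow> F \<subseteq> {1..Suc n} \<and> C1"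
    unfolding C1_def filters_closed[of "Suc n"] by blast
  have f0: "F - {Suc n} \<in> xi_filters n \<longleftrightarrow> F - {Suc n} \<subseteq> {1..n} \<and> C0'"
    unfolding C0'_def filters_closed[of n] by blast
  have sub: "F \<subseteq> {1..Suc n} \<Longrightarrow> F - {Suc n} \<subseteq> {1..n}" by auto
  show ?thesis unfolding E_def[symmetric] f1 f0 c1 loc using sub by blast
qed

definition P :: "nat \<Rightarrow> real \<Rightarrow> real" where
  "P n x = (\<Sum>F \<in> {F \<in> xi_filters n. n \<in> F}. x ^ (n - card F))"
definition Q :: "nat \<Rightarrow> real \<Rightarrow> real" where
  "Q n x = (\<Sum>F \<in> {F \<in> xi_filters n. n \<notin> F}. x ^ (n - card F))"

lemma R_PQ: "R n x = P n x + Q n x"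
proof -
  have U: "{F \<in> xi_filters n. n \<in> F} \<union> {F \<in> xi_filters n. n \<notin> F} = xi_filters n" by blast
  have "P n x + Q n x = (\<Sum>F \<in> {F \<in> xi_filters n. n \<in> F} \<union> {F \<in> xi_filters n. n \<notin> F}. x ^ (n - card F))"
    unfolding P_def Q_def
    by (rule sum.union_disjoint[symmetric]) (use finite_filters in auto)
  also have "\<dots> = R n x" unfolding U R_def ..
  finally show ?thesis by simp
qed

lemma img_sum:
  assumes "\<And>G. G \<in> A \<Longrightarrow> G \<subseteq> {1..n}"
  shows "(\<Sum>F \<in> insert (Suc n) ` A. x ^ (Suc n - card F)) = (\<Sum>G \<in> A. x ^ (n - card G))"
proof -
  have nin: "Suc n \<notin> G" if "G \<in> A" for G
    using assms[OF that] by auto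
  have inj: "inj_on (insert (Suc n)) A"
  proof (rule inj_onI)
    fix G1 G2 assume "G1 \<in> A" "G2 \<in> A" and eq: "insert (Suc n) G1 = insert (Suc n) G2"
    then have "insert (Suc n) G1 - {Suc n} = insert (Suc n) G2 - {Suc n}" by simp
    then show "G1 = G2" using nin[OF \<open>G1 \<in> A\<close>] nin[OF \<open>G2 \<in> A\<close>] by simp
  qed
  have "(\<Sum>F \<in> insert (Suc n) ` A. x ^ (Suc n - card F)) =
        (\<Sum>G \<in> A. x ^ (Suc n - card (insert (Suc n) G)))"
    by (subst sum.reindex[OF inj]) simp
  also have "\<dots> = (\<Sum>G \<in> A. x ^ (n - card G))"
  proof (rule sum.cong)
    fix G assume "G \<in> A"
    then have "finite G" using assms(1) finite_subset by blast
    then show "x ^ (Suc n - card (insert (Suc n) G)) = x ^ (n - card G)"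
      using nin[OF \<open>G \<in> A\<close>] by simp
  qed simp
  finally show ?thesis .
qed

lemma fb:
  assumes "n \<ge> 1" "n = 1 \<or> even n"
  shows "F \<in> xi_filters (Suc n) \<longleftrightarrow> F \<subseteq> {1..Suc n} \<and> F - {Suc n} \<in> xi_filters n \<and> (Suc n \<in> F \<longrightarrow> n \<in> F)"
  using filters_Suc[OF assms(1), of F] assms(2) by (simp only: if_True if_False)

lemma fa:
  assumes "n \<ge> 1" "\<not> (n = 1 \<or> even n)"
  shows "F \<in> xi_filters (Suc n) \<longleftrightarrow> F \<subseteq> {1..Suc n} \<and> F - {Suc n} \<in> xi_filters n \<and> (n \<in> F \<longrightarrow> Suc n \<in> F)"
  using filters_Suc[OF assms(1), of F] assms(2) by (simp only: if_True if_False)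

lemma ins_in:
  assumes "G \<in> xi_filters n"
  shows "insert (Suc n) G - {Suc n} = G" "insert (Suc n) G \<subseteq> {1..Suc n}" "Suc n \<notin> G"
proof -
  have "G \<subseteq> {1..n}" using filters_sub assms by blast
  then show "Suc n \<notin> G" by auto
  then show "insert (Suc n) G - {Suc n} = G" by simp
  show "insert (Suc n) G \<subseteq> {1..Suc n}" using \<open>G \<subseteq> {1..n}\<close> by auto
qed

lemma rec_below:
  assumes "n \<ge> 1" "n = 1 \<or> even n"
  shows "P (Suc n) x = P n x" "Q (Suc n) x = x * R n x"
proof -
  note fb1 = fb[OF assms]
  have e1: "{F \<in> xi_filters (Suc n). Suc n \<in> F} = insert (Suc n) ` {G \<in> xi_filters n. n \<in> G}"
  proof (intro set_eqI iffI)
    fix F assume F: "F \<in> {F \<in> xi_filters (Suc n). Suc n \<in> F}"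
    then have F1: "F \<in> xi_filters (Suc n)" and F2: "Suc n \<in> F" by simp_all
    have c: "F - {Suc n} \<in> xi_filters n" "Suc n \<in> F \<longrightarrow> n \<in> F"
      using fb1[THEN iffD1, OF F1] by simp_all
    have "n \<in> F - {Suc n}" using c(2) F2 by simp
    then have m: "F - {Suc n} \<in> {G \<in> xi_filters n. n \<in> G}" using c(1) by simp
    have "F = insert (Suc n) (F - {Suc n})" using F2 by (simp add: insert_absorb)
    then show "F \<in> insert (Suc n) ` {G \<in> xi_filters n. n \<in> G}" using m by (rule image_eqI)
  next
    fix F assume "F \<in> insert (Suc n) ` {G \<in> xi_filters n. n \<in> G}"
    then obtain G where G: "F = insert (Suc n) G" "G \<in> xi_filters n" "n \<in> G" by auto
    note ii = ins_in[OF G(2)]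
    have "insert (Suc n) G \<in> xi_filters (Suc n)"
      by (rule fb1[THEN iffD2]) (use ii(1,2) G(2,3) filters_sub[OF G(2)] in auto)
    then show "F \<in> {F \<in> xi_filters (Suc n). Suc n \<in> F}" using G(1) by simp
  qed
  have e2: "{F \<in> xi_filters (Suc n). Suc n \<notin> F} = xi_filters n"
  proof (intro set_eqI iffI)
    fix F assume F: "F \<in> {F \<in> xi_filters (Suc n). Suc n \<notin> F}"
    then have F1: "F \<in> xi_filters (Suc n)" and F2: "Suc n \<notin> F" by simp_all
    have "F - {Suc n} = F" using F2 by simp
    moreover have "F - {Suc n} \<in> xi_filters n" using fb1[THEN iffD1, OF F1] by simp
    ultimately show "F \<in> xi_filters n" by simp
  next
    fix F assume F: "F \<in> xi_filters n"
    note ii = ins_in[OF F]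
    have d: "F - {Suc n} = F" using ii(3) by simp
    have s: "F \<subseteq> {1..Suc n}" using filters_sub[OF F(1)] by auto
    have "F \<in> xi_filters (Suc n)"
      by (rule fb1[THEN iffD2], intro conjI, fact s, simp add: d F, simp add: ii(3))
    then show "F \<in> {F \<in> xi_filters (Suc n). Suc n \<notin> F}" using ii(3) by simp
  qed
  show "P (Suc n) x = P n x" unfolding P_def e1
    by (rule img_sum) (use filters_sub in blast)
  show "Q (Suc n) x = x * R n x" unfolding Q_def e2 R_def sum_distrib_left
  proof (rule sum.cong)
    fix F assume "F \<in> xi_filters n"
    then have "card F \<le> n" by (rule card_filter_le)
    then have "Suc n - card F = Suc (n - card F)" by simp
    then show "x ^ (Suc n - card F) = x * x ^ (n - card F)" by simp
  qed simp
qed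

lemma rec_above:
  assumes "n \<ge> 1" "\<not> (n = 1 \<or> even n)"
  shows "P (Suc n) x = R n x" "Q (Suc n) x = x * Q n x"
proof -
  note fa1 = fa[OF assms]
  have e1: "{F \<in> xi_filters (Suc n). Suc n \<in> F} = insert (Suc n) ` xi_filters n"
  proof (intro set_eqI iffI)
    fix F assume F: "F \<in> {F \<in> xi_filters (Suc n). Suc n \<in> F}"
    then have F1: "F \<in> xi_filters (Suc n)" and F2: "Suc n \<in> F" by simp_all
    have m: "F - {Suc n} \<in> xi_filters n"
      using fa1[THEN iffD1, OF F1] by simp
    have "F = insert (Suc n) (F - {Suc n})" using F2 by (simp add: insert_absorb)
    then show "F \<in> insert (Suc n) ` xi_filters n" using m by (rule image_eqI)
  next
    fix F assume "F \<in> insert (Suc n) ` xi_filters n"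
    then obtain G where G: "F = insert (Suc n) G" "G \<in> xi_filters n" by auto
    note ii = ins_in[OF G(2)]
    have "insert (Suc n) G \<in> xi_filters (Suc n)"
      by (rule fa1[THEN iffD2]) (use ii(1,2) G(2) filters_sub[OF G(2)] in auto)
    then show "F \<in> {F \<in> xi_filters (Suc n). Suc n \<in> F}" using G(1) by simp
  qed
  have e2: "{F \<in> xi_filters (Suc n). Suc n \<notin> F} = {G \<in> xi_filters n. n \<notin> G}"
  proof (intro set_eqI iffI)
    fix F assume F: "F \<in> {F \<in> xi_filters (Suc n). Suc n \<notin> F}"
    then have F1: "F \<in> xi_filters (Suc n)" and F2: "Suc n \<notin> F" by simp_all
    have d: "F - {Suc n} = F" using F2 by simp
    have c: "F - {Suc n} \<in> xi_filters n" "n \<in> F \<longrightarrow> Suc n \<in> F"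
      using fa1[THEN iffD1, OF F1] by simp_all
    show "F \<in> {G \<in> xi_filters n. n \<notin> G}" using c d F2 by simp
  next
    fix F assume F0: "F \<in> {G \<in> xi_filters n. n \<notin> G}"
    then have F: "F \<in> xi_filters n" "n \<notin> F" by simp_all
    note ii = ins_in[OF F(1)]
    have d: "F - {Suc n} = F" using ii(3) by simp
    have s: "F \<subseteq> {1..Suc n}" using filters_sub[OF F(1)] by auto
    have "F \<in> xi_filters (Suc n)"
      by (rule fa1[THEN iffD2], intro conjI, fact s, simp add: d F(1), simp add: F(2))
    then show "F \<in> {F \<in> xi_filters (Suc n). Suc n \<notin> F}" using ii(3) by simp
  qed
  show "P (Suc n) x = R n x" unfolding P_def e1 R_def
    by (rule img_sum) (use filters_sub in blast)
  show "Q (Suc n) x = x * Q n x" unfolding Q_def e2 sum_distrib_left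
  proof (rule sum.cong)
    fix F assume "F \<in> {G \<in> xi_filters n. n \<notin> G}"
    then have "card F \<le> n" using card_filter_le by blast
    then have "Suc n - card F = Suc (n - card F)" by simp
    then show "x ^ (Suc n - card F) = x * x ^ (n - card F)" by simp
  qed simp
qed

lemma filters_1: "xi_filters 1 = {{}, {1}}"
proof -
  have "\<not> xi_cover 1 i j" for i j unfolding cover_alt by auto
  then have "xi_filters 1 = Pow {1}" unfolding filters_closed by auto
  then show ?thesis by (simp add: Pow_singleton_iff insert_commute) (auto)
qed

lemma PQ1: "P 1 x = 1" "Q 1 x = x"
proof -
  have "{F \<in> xi_filters 1. 1 \<in> F} = {{1}}" "{F \<in> xi_filters 1. 1 \<notin> F} = {{}}"
    unfolding filters_1 by auto
  then show "P 1 x = 1" "Q 1 x = x" unfolding P_def Q_def by auto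
qed

lemma R2: "R 2 x = 1 + x + x^2"
proof -
  have e: "Suc 1 = (2::nat)" by simp
  have "P 2 x = 1" "Q 2 x = x * (1 + x)"
    using rec_below[of 1 x] PQ1[of x] R_PQ[of 1 x] unfolding e by simp_all
  then show ?thesis using R_PQ[of 2 x] by (simp add: algebra_simps power2_eq_square)
qed

lemma R3: "R 3 x = 1 + x + x^2 + x^3"
proof -
  have e: "Suc 1 = (2::nat)" "Suc 2 = (3::nat)" by simp_all
  have "P 3 x = 1" "Q 3 x = x * R 2 x"
    using rec_below[of 2 x] rec_below[of 1 x] PQ1[of x] unfolding e by simp_all
  then have "R 3 x = 1 + x * (1 + x + x^2)" using R_PQ[of 3 x] R2[of x] by simp
  then show ?thesis by algebra
qed

lemma rec_R:
  assumes "m \<ge> 1"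
  shows "R (2*m+2) x = R (2*m+1) x + x^2 * R (2*m) x"
        "R (2*m+3) x = R (2*m+1) x + x * R (2*m+2) x"
proof -
  have e: "Suc (2*m) = 2*m+1" "Suc (2*m+1) = 2*m+2" "Suc (2*m+2) = 2*m+3" by simp_all
  have a1: "Q (2*m+1) x = x * R (2*m) x" using rec_below(2)[of "2*m" x] assms unfolding e by simp
  have a2: "P (2*m+2) x = R (2*m+1) x" "Q (2*m+2) x = x * Q (2*m+1) x"
    using rec_above[of "2*m+1" x] assms unfolding e by auto
  have a3: "P (2*m+3) x = P (2*m+2) x" "Q (2*m+3) x = x * R (2*m+2) x"
    using rec_below[of "2*m+2" x] assms unfolding e by auto
  show "R (2*m+2) x = R (2*m+1) x + x^2 * R (2*m) x"
    using R_PQ[of "2*m+2" x] a1 a2 by (simp add: power2_eq_square)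
  show "R (2*m+3) x = R (2*m+1) x + x * R (2*m+2) x"
    using R_PQ[of "2*m+3" x] a2 a3 by simp
qed

lemma alg_step:
  fixes x z u v T a b a2 b2 :: real
  assumes t2: "2 * T * x = 1 + x + x\<^sup>2"
    and a: "a = x * z * (1 + x) * v - z * (1 + x + x\<^sup>2) * u"
    and b: "b = x * x * z * v + x ^ 4 * z * u"
    and a2: "a2 = b + x^2 * a"
    and b2: "b2 = b + x * a2"
  shows "a2 = x * x * z * (1 + x) * (2 * T * v - u) - x * z * (1 + x + x\<^sup>2) * v"
    and "b2 = x ^ 3 * z * (2 * T * v - u) + x ^ 5 * z * v"
  using assms by algebra+

lemma closed_form:
  fixes x t :: real
  assumes x: "x \<noteq> 0" and t: "t = (1 + x + x\<^sup>2) / (2 * x)"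
  shows "R (2 * Suc k) x = x ^ k * (1 + x) * chebU (Suc k) t - x ^ k / x * (1 + x + x\<^sup>2) * chebU k t
       \<and> R (2 * Suc k + 1) x = x ^ Suc k * chebU (Suc k) t + x ^ (Suc k + 2) * chebU k t"
proof (induction k)
  case 0
  have t2: "2 * t * x = 1 + x + x\<^sup>2" using t x by simp
  have "R 2 x = (1 + x) * (2 * t) - 1 / x * (1 + x + x\<^sup>2)"
    using x t2 R2[of x] by (simp add: field_simps)
  moreover have "R 3 x = x * (2 * t) + x ^ 3"
  proof -
    have "x * (2 * t) = 1 + x + x\<^sup>2" using t2 by (simp add: mult.commute mult.left_commute)
    then show ?thesis using R3[of x] by simp
  qed
  ultimately show ?case by (simp add: numeral_3_eq_3)
next
  case (Suc k)
  have t2: "2 * t * x = 1 + x + x\<^sup>2" using t x by simp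
  define z where "z = x ^ k / x"
  have pk: "x ^ k = x * z" using x z_def by simp
  have p1: "x ^ Suc k = x * x * z" using pk by simp
  have p2: "x ^ (Suc k + 2) = x ^ 4 * z" using pk by (simp add: eval_nat_numeral)
  have p3: "x ^ Suc (Suc k) = x ^ 3 * z" using pk by (simp add: eval_nat_numeral)
  have p4: "x ^ (Suc (Suc k) + 2) = x ^ 5 * z" using pk by (simp add: eval_nat_numeral)
  have p5: "x ^ Suc k / x = x * z" using p1 x by simp
  have U: "chebU (Suc (Suc k)) t = 2 * t * chebU (Suc k) t - chebU k t" by simp
  have r1: "R (2 * Suc (Suc k)) x = R (2 * Suc k + 1) x + x^2 * R (2 * Suc k) x"
    using rec_R(1)[of "Suc k" x] by simp
  have r2: "R (2 * Suc (Suc k) + 1) x = R (2 * Suc k + 1) x + x * R (2 * Suc (Suc k)) x"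
    using rec_R(2)[of "Suc k" x] by (simp add: eval_nat_numeral)
  have IH1: "R (2 * Suc k) x = x * z * (1 + x) * chebU (Suc k) t - z * (1 + x + x\<^sup>2) * chebU k t"
    using Suc.IH unfolding pk using x by simp
  have IH2: "R (2 * Suc k + 1) x = x * x * z * chebU (Suc k) t + x ^ 4 * z * chebU k t"
    using Suc.IH unfolding p1 p2 by simp
  note st = alg_step[OF t2 IH1 IH2 r1 r2]
  show ?case unfolding p1 p3 p4 p5 U using st by simp
qed

theorem mainTheorem5:
  fixes m :: nat and x :: real
  assumes "m \<ge> 1" and "x \<noteq> 0"
  defines "t \<equiv> (1 + x + x\<^sup>2) / (2 * x)"
  shows "(R (2 * m) x =
           x powi (int m - 1) * (1 + x) * chebU m t
           - x powi (int m - 2) * (1 + x + x\<^sup>2) * chebU (m - 1) t)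
         \<and> (R (2 * m + 1) x = x ^ m * chebU m t + x ^ (m + 2) * chebU (m - 1) t)"
proof -
  obtain k where k: "m = Suc k" using assms(1) by (cases m) auto
  have p1: "x powi (int m - 1) = x ^ k" using k by simp
  have p2: "x powi (int m - 2) = x ^ k / x"
  proof -
    have "int m - 2 = int k - 1" using k by simp
    then show ?thesis using power_int_diff[of x "int k" 1] assms(2) by simp
  qed
  have p3: "x powi (int k - 1) = x ^ k / x"
    using power_int_diff[of x "int k" 1] assms(2) by simp
  have cf: "R (2 * Suc k) x = x ^ k * (1 + x) * chebU (Suc k) t - x ^ k / x * (1 + x + x\<^sup>2) * chebU k t
       \<and> R (2 * Suc k + 1) x = x ^ Suc k * chebU (Suc k) t + x ^ (Suc k + 2) * chebU k t"
    using closed_form[OF assms(2), of t k] t_def by simp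
  show ?thesis unfolding p1 p2 using cf k by simp
qed

end
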